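(* Let $X$ be a shift space and $N\ge0$. The following are equivalent: (1) the extension graph $\mathcal{E}_X(v)$ is acyclic for every $v\in\mathcal{L}(X)$ with $|v|<N$; (2) the graph $G^L_n(X)$ is acyclic for the labeling for every $n\le N$; (3) the graph $G^R_n(X)$ is acyclic for the labeling for every $n\le N$.
   Context: $X\subseteq\mathcal{A}^{\mathbb{Z}}$ is a shift space over a finite alphabet $\mathcal{A}$ with language $\mathcal{L}(X)$, $\mathcal{L}_n(X)$ its words of length $n$. For $v\in\mathcal{L}(X)$, $E^L_X(v)=\{a:av\in\mathcal{L}(X)\}$, $E^R_X(v)=\{b:vb\in\mathcal{L}(X)\}$, and $\mathcal{E}_X(v)$ is the bipartite graph whose vertices are the disjoint union of $\{a^L:a\in E^L_X(v)\}$ and $\{b^R:b\in E^R_X(v)\}$, with an edge $\{a^L,b^R\}$ whenever $avb\in\mathcal{L}(X)$. $G^L_n(X)$ (resp. $G^R_n(X)$) is the multigraph with labeled edges whose vertex set is $\mathcal{A}$ and which has, for each $v\in\mathcal{L}_n(X)$ and each pair of distinct $a,b\in E^L_X(v)$ (resp. $a,b\in E^R_X(v)$), an undirected edge labeled $v$ between $a$ and $b$. A multigraph with labeled edges is acyclic for the labeling if every simple cycle in it uses only edges with the same label. *)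

theory Defs
  imports Main
begin

text \<open>A shift space is a shift-invariant subset (sigma(X) = X) that is closed in the
  product topology (discrete alphabet); closedness is written out via cylinders:
  x is in X iff every central block of x agrees with some point of X.\<close>

definition shift_space :: "(int \<Rightarrow> 'a::finite) set \<Rightarrow> bool" where
  "shift_space X \<longleftrightarrow>
     (\<forall>x. x \<in> X \<longleftrightarrow> (\<lambda>i. x (i + 1)) \<in> X) \<and>
     (\<forall>x. (\<forall>n::nat. \<exists>y\<in>X. \<forall>i. \<bar>i\<bar> \<le> int n \<longrightarrow> y i = x i) \<longrightarrow> x \<in> X)"

definition block :: "(int \<Rightarrow> 'a) \<Rightarrow> int \<Rightarrow> nat \<Rightarrow> 'a list" where
  "block x i n = map (\<lambda>k. x (i + int k)) [0..<n]"

definition language :: "(int \<Rightarrow> 'a) set \<Rightarrow> 'a list set" where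
  "language X = {w. \<exists>x\<in>X. \<exists>i. w = block x i (length w)}"

definition language_n :: "(int \<Rightarrow> 'a) set \<Rightarrow> nat \<Rightarrow> 'a list set" where
  "language_n X n = {w \<in> language X. length w = n}"

definition ext_left :: "(int \<Rightarrow> 'a) set \<Rightarrow> 'a list \<Rightarrow> 'a set" where
  "ext_left X v = {a. a # v \<in> language X}"

definition ext_right :: "(int \<Rightarrow> 'a) set \<Rightarrow> 'a list \<Rightarrow> 'a set" where
  "ext_right X v = {b. v @ [b] \<in> language X}"

text \<open>Multigraphs with labeled edges: a set of edges, each edge being a pair
  (label, set of its two endpoints). Two parallel edges are distinguished by
  their labels.\<close>

type_synonym ('l, 'v) lgraph = "('l \<times> 'v set) set"

definition simple_cycle :: "('l, 'v) lgraph \<Rightarrow> 'v list \<Rightarrow> 'l list \<Rightarrow> bool" where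
  "simple_cycle G vs ls \<longleftrightarrow>
     length vs \<ge> 2 \<and> length ls = length vs \<and> distinct vs \<and>
     (\<forall>i < length vs. (ls ! i, {vs ! i, vs ! ((i + 1) mod length vs)}) \<in> G) \<and>
     distinct (map (\<lambda>i. (ls ! i, {vs ! i, vs ! ((i + 1) mod length vs)})) [0..<length vs])"

definition acyclic_for_labeling :: "('l, 'v) lgraph \<Rightarrow> bool" where
  "acyclic_for_labeling G \<longleftrightarrow>
     (\<forall>vs ls. simple_cycle G vs ls \<longrightarrow> (\<forall>i < length ls. \<forall>j < length ls. ls ! i = ls ! j))"

definition acyclic_graph :: "(unit, 'v) lgraph \<Rightarrow> bool" where
  "acyclic_graph G \<longleftrightarrow> (\<forall>vs ls. \<not> simple_cycle G vs ls)"

text \<open>Extension graph E_X(v): bipartite, left copy Inl a for a in E^L(v),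
  right copy Inr b for b in E^R(v), edge {a^L, b^R} iff avb in L(X).\<close>
definition extension_graph :: "(int \<Rightarrow> 'a) set \<Rightarrow> 'a list \<Rightarrow> (unit, 'a + 'a) lgraph" where
  "extension_graph X v =
     {((), {Inl a, Inr b}) | a b. a \<in> ext_left X v \<and> b \<in> ext_right X v \<and>
                                 a # v @ [b] \<in> language X}"

definition GL :: "(int \<Rightarrow> 'a) set \<Rightarrow> nat \<Rightarrow> ('a list, 'a) lgraph" where
  "GL X n = {(v, {a, b}) | v a b. v \<in> language_n X n \<and>
                a \<in> ext_left X v \<and> b \<in> ext_left X v \<and> a \<noteq> b}"

definition GR :: "(int \<Rightarrow> 'a) set \<Rightarrow> nat \<Rightarrow> ('a list, 'a) lgraph" where
  "GR X n = {(v, {a, b}) | v a b. v \<in> language_n X n \<and>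
                a \<in> ext_right X v \<and> b \<in> ext_right X v \<and> a \<noteq> b}"

end

theory Submission
  imports Defs
begin


lemma block_length[simp]: "length (block x i n) = n"
  by (simp add: block_def)
lemma block_nth[simp]: "k < n \<Longrightarrow> block x i n ! k = x (i + int k)"
  by (simp add: block_def)

lemma lang_append:
  assumes "u @ w \<in> language X" shows "u \<in> language X" "w \<in> language X"
proof -
  from assms obtain x i where x: "x \<in> X" and e: "u @ w = block x i (length (u@w))"
    unfolding language_def by blast
  have ek: "(u@w) ! k = x (i + int k)" if "k < length (u@w)" for k
  proof -
    have "(u@w) ! k = block x i (length (u@w)) ! k" by (metis e)
    then show ?thesis using that by simp
  qed
  have "u = block x i (length u)"
  proof (rule nth_equalityI)
    fix k assume k: "k < length u"
    then have "u ! k = (u@w) ! k" by (simp add: nth_append)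
    also have "\<dots> = x (i + int k)" using k by (intro ek) simp
    finally show "u ! k = block x i (length u) ! k" using k by simp
  qed simp
  then show "u \<in> language X" using x unfolding language_def by blast
  have "w = block x (i + int (length u)) (length w)"
  proof (rule nth_equalityI)
    fix k assume k: "k < length w"
    then have "w ! k = (u@w) ! (length u + k)" by (simp add: nth_append)
    also have "\<dots> = x (i + int (length u + k))" using k by (intro ek) simp
    finally show "w ! k = block x (i + int (length u)) (length w) ! k" using k by (simp add: add.assoc)
  qed simp
  then show "w \<in> language X" using x unfolding language_def by blast
qed

lemma suc_mod: "(i::nat) < k \<Longrightarrow> (i+1) mod k = (if i+1 < k then i+1 else 0)"
proof (cases "i+1 < k")
  case False
  assume "i < k"
  then have "i+1 = k" using False by simp
  then show ?thesis by simp
qed simp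

lemma suc_mod_neq: "2 \<le> (k::nat) \<Longrightarrow> i < k \<Longrightarrow> (i+1) mod k \<noteq> i"
  by (subst suc_mod) auto

lemma edge_inj:
  assumes "distinct vs" "3 \<le> length vs" "i < length vs" "j < length vs"
    "{vs!i, vs!((i+1) mod length vs)} = {vs!j, vs!((j+1) mod length vs)}"
  shows "i = j"
proof -
  let ?k = "length vs"
  have mi: "(i+1) mod ?k < ?k" "(j+1) mod ?k < ?k" using assms by (auto intro: mod_less_divisor)
  from assms(5) have "(vs!i = vs!j \<and> vs!((i+1) mod ?k) = vs!((j+1) mod ?k)) \<or>
     (vs!i = vs!((j+1) mod ?k) \<and> vs!((i+1) mod ?k) = vs!j)"
    by (auto simp: doubleton_eq_iff)
  then have "i = j \<or> (i = (j+1) mod ?k \<and> (i+1) mod ?k = j)"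
    using assms(1,3,4) mi by (auto simp: nth_eq_iff_index_eq)
  moreover have "\<not> (i = (j+1) mod ?k \<and> (i+1) mod ?k = j)"
  proof
    assume h: "i = (j+1) mod ?k \<and> (i+1) mod ?k = j"
    show False
    proof (cases "j+1 < ?k")
      case True
      then have "i = j+1" using h by simp
      then show False using h assms(2,3) suc_mod[OF assms(3)] by (auto split: if_splits)
    next
      case False
      then have "i = 0" using h assms(4) suc_mod[OF assms(4)] by simp
      have "(1::nat) mod ?k = 1" using assms(2) by simp
      moreover have "j+1 = ?k" using False assms(4) by simp
      ultimately show False using h assms(2) \<open>i = 0\<close> by simp
    qed
  qed
  ultimately show ?thesis by blast
qed

definition walk :: "('x \<Rightarrow> 'y \<Rightarrow> bool) \<Rightarrow> 'x list \<Rightarrow> 'y list \<Rightarrow> bool" where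
  "walk R as bs \<longleftrightarrow> length bs = length as \<and>
     (\<forall>i<length as. R (as!i) (bs!i) \<and> R (as!((i+1) mod length as)) (bs!i))"

definition altcyc :: "('x \<Rightarrow> 'y \<Rightarrow> bool) \<Rightarrow> 'x list \<Rightarrow> 'y list \<Rightarrow> bool" where
  "altcyc R as bs \<longleftrightarrow> walk R as bs \<and> distinct as \<and> distinct bs \<and> 2 \<le> length as"

lemma walkD: assumes "walk R as bs" "i < length as"
  shows "R (as!i) (bs!i)" "R (as!((i+1) mod length as)) (bs!i)" "length bs = length as"
  using assms by (auto simp: walk_def)

lemma walkI: "length bs = length as \<Longrightarrow> (\<And>i. i < length as \<Longrightarrow> R (as!i) (bs!i) \<and> R (as!((i+1) mod length as)) (bs!i)) \<Longrightarrow> walk R as bs"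
  by (auto simp: walk_def)

lemma walk_rotate:
  assumes "walk R as bs" shows "walk R (rotate r as) (rotate r bs)"
proof -
  let ?k = "length as"
  have l: "length bs = ?k" using assms by (simp add: walk_def)
  show ?thesis
  proof (rule walkI)
    show "length (rotate r bs) = length (rotate r as)" using l by simp
    fix i assume i: "i < length (rotate r as)"
    then have i': "i < ?k" by simp
    define j where "j = (r+i) mod ?k"
    have "0 < ?k" using i' by linarith
    then have m: "j < ?k" unfolding j_def by simp
    have e: "(r + (i+1) mod ?k) mod ?k = (j + 1) mod ?k" unfolding j_def by (simp add: mod_simps)
    have m2: "(i+1) mod ?k < ?k" using \<open>0 < ?k\<close> by simp
    show "R (rotate r as ! i) (rotate r bs ! i) \<and> R (rotate r as ! ((i+1) mod length (rotate r as))) (rotate r bs ! i)"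
      using walkD[OF assms m] i' l e m2 by (simp add: nth_rotate j_def)
  qed
qed



lemma walk_extract:
  assumes "walk R as bs" "distinct as" "x \<in> set bs" "y \<in> set bs" "x \<noteq> y"
  shows "\<exists>as' bs'. altcyc R as' bs'"
  using assms
proof (induction "length as" arbitrary: as bs x y rule: less_induct)
  case less
  let ?k = "length as"
  have lb: "length bs = ?k" using less.prems(1) by (simp add: walk_def)
  show ?case
  proof (cases "distinct bs")
    case True
    have "2 \<le> ?k"
    proof -
      from less.prems(3,4) obtain i j where "i < length bs" "j<length bs" "bs!i = x" "bs!j = y"
        by (metis in_set_conv_nth)
      then have "i \<noteq> j" using less.prems(5) by auto
      then show ?thesis using \<open>i<length bs\<close> \<open>j<length bs\<close> lb by linarith
    qed
    then show ?thesis using True less.prems(1,2) unfolding altcyc_def by blast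
  next
    case False
    obtain p q where pq: "p < q" "q < ?k" "bs!p = bs!q"
    proof -
      from False obtain p q where "p < length bs" "q < length bs" "p \<noteq> q" "bs!p = bs!q"
        by (auto simp: distinct_conv_nth)
      then show ?thesis using that lb by (metis linorder_neqE_nat)
    qed
    define r where "r = q + 1"
    define as2 where "as2 = rotate r as"
    define bs2 where "bs2 = rotate r bs"
    define j0 where "j0 = p + ?k - q - 1"
    have w2: "walk R as2 bs2" using walk_rotate less.prems(1) by (simp add: as2_def bs2_def)
    have d2: "distinct as2" using less.prems(2) by (simp add: as2_def)
    have len2: "length as2 = ?k" "length bs2 = ?k" using lb by (simp_all add: as2_def bs2_def)
    have j0: "j0 < ?k - 1" using pq by (simp add: j0_def)
    have k0: "0 < ?k" using pq by linarith
    have eq: "bs2 ! j0 = bs2 ! (?k - 1)"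
    proof -
      have "bs2 ! j0 = bs ! ((r + j0) mod ?k)" using j0 lb by (simp add: bs2_def nth_rotate)
      also have "r + j0 = p + ?k" using pq by (simp add: r_def j0_def)
      also have "bs ! ((p + ?k) mod ?k) = bs ! p" using pq by simp
      also have "\<dots> = bs ! q" by (rule pq(3))
      also have "q = (r + (?k - 1)) mod ?k" using pq by (simp add: r_def)
      also have "bs ! \<dots> = bs2 ! (?k - 1)" using k0 lb by (simp add: bs2_def nth_rotate)
      finally show ?thesis .
    qed
    define l where "l = j0 + 1"
    have l: "0 < l" "l < ?k" using j0 by (auto simp: l_def)
    define as1 where "as1 = take l as2"
    define bs1 where "bs1 = take l bs2"
    define as3 where "as3 = drop l as2"
    define bs3 where "bs3 = drop l bs2"
    have w1: "walk R as1 bs1"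
    proof (rule walkI)
      show "length bs1 = length as1" using len2 by (simp add: as1_def bs1_def)
      fix i assume "i < length as1"
      then have i: "i < l" using l len2 by (simp add: as1_def)
      have A: "R (as2!i) (bs2!i)" using walkD(1)[OF w2] i l len2 by simp
      have B: "R (as1!((i+1) mod length as1)) (bs1!i)"
      proof (cases "i + 1 < l")
        case True
        then have "(i+1) mod length as1 = i+1" using l len2 by (simp add: as1_def)
        moreover have "(i+1) mod ?k = i+1" using True l by simp
        ultimately show ?thesis using walkD(2)[OF w2, of i] i l len2 True
          by (simp add: as1_def bs1_def)
      next
        case False
        then have ij: "i = j0" using i l_def by simp
        have "(i+1) mod length as1 = 0" using False i l len2 suc_mod[of i l] by (simp add: as1_def)
        moreover have "R (as2 ! 0) (bs2 ! (?k - 1))"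
          using walkD(2)[OF w2, of "?k - 1"] k0 len2 by simp
        ultimately show ?thesis using ij eq l by (simp add: as1_def bs1_def l_def)
      qed
      show "R (as1!i) (bs1!i) \<and> R (as1!((i+1) mod length as1)) (bs1!i)"
        using A B i by (simp add: as1_def bs1_def)
    qed
    have w3: "walk R as3 bs3"
    proof (rule walkI)
      show "length bs3 = length as3" using len2 by (simp add: as3_def bs3_def)
      fix i assume "i < length as3"
      then have i: "l + i < ?k" using l len2 by (simp add: as3_def)
      have A: "R (as2!(l+i)) (bs2!(l+i))" using walkD(1)[OF w2] i len2 by simp
      have B: "R (as3!((i+1) mod length as3)) (bs3!i)"
      proof (cases "l + i + 1 < ?k")
        case True
        then have "(i+1) mod length as3 = i+1" using l len2 by (simp add: as3_def)
        moreover have "(l+i+1) mod ?k = l+i+1" using True by simp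
        ultimately show ?thesis using walkD(2)[OF w2, of "l+i"] i l len2 True
          by (simp add: as3_def bs3_def add.assoc)
      next
        case False
        then have ij: "l + i = ?k - 1" using i by simp
        have "(i+1) mod length as3 = 0" using False i l len2 suc_mod[of i "?k - l"] by (simp add: as3_def)
        moreover have "R (as2 ! l) (bs2 ! j0)"
          using walkD(2)[OF w2, of j0] j0 len2 l by (simp add: l_def)
        ultimately show ?thesis using ij eq l len2 by (simp add: as3_def bs3_def nth_drop)
      qed
      show "R (as3!i) (bs3!i) \<and> R (as3!((i+1) mod length as3)) (bs3!i)"
        using A B i len2 by (simp add: as3_def bs3_def nth_drop)
    qed
    have setb: "set bs2 = set bs1 \<union> set bs3" unfolding bs1_def bs3_def
      by (metis append_take_drop_id set_append)
    have c1: "bs2 ! j0 \<in> set bs1"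
    proof -
      have "j0 < length bs1" using l len2 by (simp add: bs1_def l_def)
      moreover have "bs1 ! j0 = bs2 ! j0" by (simp add: bs1_def l_def)
      ultimately show ?thesis by (metis nth_mem)
    qed
    have c3: "bs2 ! (?k - 1) \<in> set bs3"
    proof -
      have "?k - 1 - l < length bs3" using l len2 by (simp add: bs3_def)
      moreover have "bs3 ! (?k - 1 - l) = bs2 ! (?k - 1)" using l len2 by (simp add: bs3_def nth_drop)
      ultimately show ?thesis by (metis nth_mem)
    qed
    have "(\<exists>x\<in>set bs1. \<exists>y\<in>set bs1. x \<noteq> y) \<or> (\<exists>x\<in>set bs3. \<exists>y\<in>set bs3. x \<noteq> y)"
    proof (rule ccontr)
      assume "\<not> ?thesis"
      then have all: "\<forall>z\<in>set bs2. z = bs2 ! j0" using setb c1 c3 eq by auto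
      have "x \<in> set bs2" "y \<in> set bs2" using less.prems(3,4) by (simp_all add: bs2_def)
      then have "x = bs2 ! j0 \<and> y = bs2 ! j0" using all by (simp only: Ball_def) blast
      then show False using less.prems(5) by simp
    qed
    moreover have "length as1 < ?k" "length as3 < ?k" using l len2 by (simp_all add: as1_def as3_def)
    moreover have "distinct as1" "distinct as3" using d2 by (simp_all add: as1_def as3_def)
    ultimately show ?thesis using less.hyps w1 w3 by blast
  qed
qed



lemma altcyc_flip:
  assumes "altcyc R xs ys" shows "altcyc (\<lambda>y x. R x y) ys (rotate1 xs)"
proof -
  have w: "walk R xs ys" and d: "distinct xs" "distinct ys" and m: "2 \<le> length xs"
    using assms by (auto simp: altcyc_def)
  have l: "length ys = length xs" using w by (simp add: walk_def)
  have "walk (\<lambda>y x. R x y) ys (rotate1 xs)"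
  proof (rule walkI)
    show "length (rotate1 xs) = length ys" using l by simp
    fix i assume i: "i < length ys"
    then have i': "i < length xs" using l by simp
    have r: "rotate1 xs ! i = xs ! ((i+1) mod length xs)" using i' by (simp add: nth_rotate1)
    have k0: "0 < length xs" using i' by linarith
    have m1: "(i+1) mod length xs < length xs" using k0 by simp
    have "(((i+1) mod length xs) + 1) mod length xs = (i + 1 + 1) mod length xs" by (simp add: mod_simps)
    show "R (rotate1 xs ! i) (ys ! i) \<and> R (rotate1 xs ! i) (ys ! ((i + 1) mod length ys))"
      using walkD[OF w i'] walkD[OF w m1] r l by simp
  qed
  then show ?thesis using d m l by (simp add: altcyc_def)
qed

lemma sc_rotate:
  assumes "simple_cycle G vs ls" shows "simple_cycle G (rotate r vs) (rotate r ls)"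
proof -
  let ?k = "length vs"
  define f where "f = (\<lambda>i. (ls ! i, {vs ! i, vs ! ((i + 1) mod ?k)}))"
  have A: "2 \<le> ?k" "length ls = ?k" "distinct vs" "\<forall>i<?k. f i \<in> G" "distinct (map f [0..<?k])"
    using assms unfolding simple_cycle_def f_def by auto
  have k0: "0 < ?k" using A by linarith
  have fr: "(rotate r ls ! i, {rotate r vs ! i, rotate r vs ! ((i + 1) mod ?k)}) = f ((r+i) mod ?k)"
    if i: "i < ?k" for i
  proof -
    have e: "(r + (i+1) mod ?k) mod ?k = ((r+i) mod ?k + 1) mod ?k" by (simp add: mod_simps)
    show ?thesis using i A(2) k0 e by (simp add: nth_rotate f_def)
  qed
  have "map (\<lambda>i. (rotate r ls ! i, {rotate r vs ! i, rotate r vs ! ((i + 1) mod ?k)})) [0..<?k]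
        = rotate r (map f [0..<?k])"
  proof (rule nth_equalityI)
    fix i assume "i < length (map (\<lambda>i. (rotate r ls ! i, {rotate r vs ! i, rotate r vs ! ((i + 1) mod ?k)})) [0..<?k])"
    then have i: "i < ?k" by simp
    have "(r+i) mod ?k < ?k" using k0 by simp
    then show "map (\<lambda>i. (rotate r ls ! i, {rotate r vs ! i, rotate r vs ! ((i + 1) mod ?k)})) [0..<?k] ! i
        = rotate r (map f [0..<?k]) ! i"
      using fr[OF i] i by (simp add: nth_rotate del: upt_Suc)
  qed simp
  then show ?thesis using A fr k0 unfolding simple_cycle_def
    by (simp add: mod_less_divisor)
qed

lemma altcyc_cycle:
  assumes "altcyc R xs ys" "inj f"
    "\<And>x x' y. R x y \<Longrightarrow> R x' y \<Longrightarrow> x \<noteq> x' \<Longrightarrow> (f y, {x, x'}) \<in> G"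
  shows "\<not> acyclic_for_labeling G"
proof -
  have w: "walk R xs ys" and d: "distinct xs" "distinct ys" and m: "2 \<le> length xs"
    using assms(1) by (auto simp: altcyc_def)
  have l: "length ys = length xs" using w by (simp add: walk_def)
  let ?k = "length xs"
  let ?ls = "map f ys"
  have sc: "simple_cycle G xs ?ls" unfolding simple_cycle_def
  proof (intro conjI allI impI)
    show "2 \<le> ?k" by fact
    show "length ?ls = ?k" using l by simp
    show "distinct xs" by fact
    fix i assume i: "i < ?k"
    have ne: "xs ! i \<noteq> xs ! ((i+1) mod ?k)"
    proof -
      have "0 < ?k" using i by linarith
      then have "(i+1) mod ?k < ?k" by simp
      then show ?thesis using d(1) i suc_mod_neq[OF m i] by (simp add: nth_eq_iff_index_eq)
    qed
    show "(?ls ! i, {xs ! i, xs ! ((i + 1) mod ?k)}) \<in> G"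
      using assms(3)[OF walkD(1)[OF w i] walkD(2)[OF w i] ne] i l by simp
  next
    show "distinct (map (\<lambda>i. (?ls ! i, {xs ! i, xs ! ((i + 1) mod ?k)})) [0..<?k])"
    proof (subst distinct_map, intro conjI)
      show "inj_on (\<lambda>i. (?ls ! i, {xs ! i, xs ! ((i + 1) mod ?k)})) (set [0..<?k])"
      proof (rule inj_onI)
        fix i j assume "i \<in> set [0..<?k]" "j \<in> set [0..<?k]"
          "(?ls ! i, {xs ! i, xs ! ((i + 1) mod ?k)}) = (?ls ! j, {xs ! j, xs ! ((j + 1) mod ?k)})"
        then show "i = j" using l d(2) assms(2) by (auto simp: inj_eq nth_eq_iff_index_eq)
      qed
    qed simp
  qed
  have "ys ! 0 \<noteq> ys ! 1"
  proof -
    have "0 < length ys" "1 < length ys" using m l by auto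
    then show ?thesis using d(2) nth_eq_iff_index_eq by fastforce
  qed
  moreover have "0 < length ys" "1 < length ys" using m l by auto
  ultimately have "?ls ! 0 \<noteq> ?ls ! 1" using assms(2) by (simp add: inj_eq)
  then show ?thesis using sc m l unfolding acyclic_for_labeling_def
    by (metis One_nat_def Suc_1 Suc_le_lessD length_map less_imp_le_nat less_le_trans)
qed

lemma proj_cycle:
  assumes "simple_cycle G vs ls" "\<And>l e. (l, e) \<in> G \<Longrightarrow> (p l, e) \<in> G'"
    "i < length ls" "j < length ls" "p (ls ! i) \<noteq> p (ls ! j)"
  shows "\<not> acyclic_for_labeling G'"
proof -
  let ?k = "length vs"
  let ?ls = "map p ls"
  have A: "2 \<le> ?k" "length ls = ?k" "distinct vs"
    "\<forall>i<?k. (ls ! i, {vs ! i, vs ! ((i + 1) mod ?k)}) \<in> G"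
    using assms(1) unfolding simple_cycle_def by auto
  have sc: "simple_cycle G' vs ?ls" unfolding simple_cycle_def
  proof (intro conjI allI impI)
    show "2 \<le> ?k" "length ?ls = ?k" "distinct vs" using A by auto
    fix i assume i: "i < ?k"
    show "(?ls ! i, {vs ! i, vs ! ((i + 1) mod ?k)}) \<in> G'"
      using assms(2) A(4) i A(2) by simp
  next
    show "distinct (map (\<lambda>i. (?ls ! i, {vs ! i, vs ! ((i + 1) mod ?k)})) [0..<?k])"
    proof (cases "?k = 2")
      case True
      then have "[0..<?k] = [0, 1]" by (simp add: upt_rec)
      moreover have "p (ls ! 0) \<noteq> p (ls ! 1)"
      proof -
        have "i = 0 \<or> i = 1" "j = 0 \<or> j = 1" using assms(3,4) True A(2) by auto
        then show ?thesis using assms(5) by auto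
      qed
      ultimately show ?thesis using True A(2) by simp
    next
      case False
      then have k3: "3 \<le> ?k" using A(1) by simp
      show ?thesis
      proof (subst distinct_map, intro conjI)
        show "inj_on (\<lambda>i. (?ls ! i, {vs ! i, vs ! ((i + 1) mod ?k)})) (set [0..<?k])"
          using edge_inj[OF A(3) k3] by (auto intro!: inj_onI)
      qed simp
    qed
  qed
  moreover have "?ls ! i \<noteq> ?ls ! j" using assms(3,4,5) by simp
  ultimately show ?thesis using assms(3,4) unfolding acyclic_for_labeling_def
    by (metis length_map)
qed



lemma ext_mem:
  "(u, e) \<in> extension_graph X v \<longleftrightarrow> (\<exists>a b. e = {Inl a, Inr b} \<and> a # v @ [b] \<in> language X)"
proof
  assume "\<exists>a b. e = {Inl a, Inr b} \<and> a # v @ [b] \<in> language X"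
  then obtain a b where e: "e = {Inl a, Inr b}" and L: "a # v @ [b] \<in> language X" by blast
  have "(a # v) @ [b] \<in> language X" using L by simp
  then have "a # v \<in> language X" by (rule lang_append)
  moreover have "[a] @ (v @ [b]) \<in> language X" using L by simp
  then have "v @ [b] \<in> language X" by (rule lang_append)
  ultimately show "(u, e) \<in> extension_graph X v" using e L
    unfolding extension_graph_def ext_left_def ext_right_def by auto
qed (auto simp: extension_graph_def)

lemma altcyc_ext:
  assumes "altcyc (\<lambda>a b. a # v @ [b] \<in> language X) as bs"
  shows "\<not> acyclic_graph (extension_graph X v)"
proof -
  let ?R = "\<lambda>a b. a # v @ [b] \<in> language X"
  have w: "walk ?R as bs" and d: "distinct as" "distinct bs" and m: "2 \<le> length as"
    using assms by (auto simp: altcyc_def)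
  have l: "length bs = length as" using w by (simp add: walk_def)
  let ?m = "length as"
  define g where "g = (\<lambda>t. if even t then Inl (as ! (t div 2)) else Inr (bs ! (t div 2)))"
  define vs where "vs = map g [0..<2 * ?m]"
  have lv: "length vs = 2 * ?m" by (simp add: vs_def)
  have vsn: "vs ! t = g t" if "t < 2 * ?m" for t using that by (simp add: vs_def)
  have dv: "distinct vs" unfolding vs_def
  proof (subst distinct_map, intro conjI)
    show "inj_on g (set [0..<2 * ?m])"
    proof (rule inj_onI)
      fix s t assume s: "s \<in> set [0..<2 * ?m]" and t: "t \<in> set [0..<2 * ?m]" and e: "g s = g t"
      have s2: "s div 2 < ?m" "t div 2 < ?m" using s t by auto
      have "even s = even t" using e by (auto simp: g_def split: if_splits)
      moreover have "s div 2 = t div 2"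
        using e s2 d l by (auto simp: g_def nth_eq_iff_index_eq split: if_splits)
      ultimately show "s = t" by presburger
    qed
  qed simp
  have sc: "simple_cycle (extension_graph X v) vs (replicate (2 * ?m) ())"
    unfolding simple_cycle_def lv
  proof (intro conjI allI impI)
    show "2 \<le> 2 * ?m" using m by simp
    show "length (replicate (2 * ?m) ()) = 2 * ?m" by simp
    show "distinct vs" by (rule dv)
    fix t assume t: "t < 2 * ?m"
    define j where "j = t div 2"
    have j: "j < ?m" using t by (simp add: j_def)
    show "(replicate (2 * ?m) () ! t, {vs ! t, vs ! ((t + 1) mod (2 * ?m))}) \<in> extension_graph X v"
    proof (cases "even t")
      case True
      then have "t = 2 * j" by (simp add: j_def)
      then have "t + 1 < 2 * ?m" using j by linarith
      then have "vs ! ((t + 1) mod (2 * ?m)) = Inr (bs ! j)" using True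
        by (simp add: vsn g_def j_def)
      moreover have "vs ! t = Inl (as ! j)" using True t by (simp add: vsn g_def j_def)
      ultimately show ?thesis using walkD(1)[OF w j] by (auto simp: ext_mem)
    next
      case False
      then have tt: "t + 1 = 2 * (j + 1)" by (simp add: j_def)
      have "(t + 1) mod (2 * ?m) = 2 * ((j + 1) mod ?m)" unfolding tt by (rule mod_mult_mult1)
      moreover have "0 < ?m" using m by linarith
      then have "2 * ((j + 1) mod ?m) < 2 * ?m" by simp
      ultimately have "vs ! ((t + 1) mod (2 * ?m)) = Inl (as ! ((j+1) mod ?m))"
        by (simp add: vsn g_def)
      moreover have "vs ! t = Inr (bs ! j)" using False t by (simp add: vsn g_def j_def)
      ultimately show ?thesis using walkD(2)[OF w j] by (auto simp: ext_mem insert_commute)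
    qed
  next
    have d3: "3 \<le> length vs" using m lv by simp
    show "distinct (map (\<lambda>i. (replicate (2 * ?m) () ! i, {vs ! i, vs ! ((i + 1) mod (2 * ?m))})) [0..<2 * ?m])"
    proof (subst distinct_map, intro conjI)
      show "inj_on (\<lambda>i. (replicate (2 * ?m) () ! i, {vs ! i, vs ! ((i + 1) mod (2 * ?m))})) (set [0..<2 * ?m])"
        using edge_inj[OF dv d3] lv by (auto intro!: inj_onI)
    qed simp
  qed
  then show ?thesis unfolding acyclic_graph_def by blast
qed



lemma ext_cycle_altcyc0:
  assumes sc: "simple_cycle (extension_graph X v) vs ls" and h0: "isl (vs ! 0)"
  shows "\<exists>as bs. altcyc (\<lambda>a b. a # v @ [b] \<in> language X) as bs"
proof -
  let ?R = "\<lambda>a b. a # v @ [b] \<in> language X"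
  let ?k = "length vs"
  have A: "2 \<le> ?k" "length ls = ?k" "distinct vs"
    "\<forall>i<?k. (ls ! i, {vs ! i, vs ! ((i + 1) mod ?k)}) \<in> extension_graph X v"
    "distinct (map (\<lambda>i. (ls ! i, {vs ! i, vs ! ((i + 1) mod ?k)})) [0..<?k])"
    using sc unfolding simple_cycle_def by auto
  have k0: "0 < ?k" using A(1) by linarith
  have edge: "\<exists>a b. ((vs ! t = Inl a \<and> vs ! ((t + 1) mod ?k) = Inr b) \<or>
                     (vs ! t = Inr b \<and> vs ! ((t + 1) mod ?k) = Inl a)) \<and> ?R a b"
    if t: "t < ?k" for t
  proof -
    have "(ls ! t, {vs ! t, vs ! ((t + 1) mod ?k)}) \<in> extension_graph X v" using A(4) t by blast
    then obtain a b where "{vs ! t, vs ! ((t + 1) mod ?k)} = {Inl a, Inr b}" "?R a b"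
      unfolding ext_mem by blast
    then show ?thesis by (auto simp: doubleton_eq_iff)
  qed
  have alt: "isl (vs ! t) \<noteq> isl (vs ! ((t + 1) mod ?k))" if "t < ?k" for t
    using edge[OF that] by auto
  have par: "isl (vs ! i) = even i" if "i < ?k" for i
    using that
  proof (induction i)
    case 0 then show ?case using h0 by simp
  next
    case (Suc i)
    then have "(i + 1) mod ?k = Suc i" by simp
    then show ?case using alt[of i] Suc by auto
  qed
  have "even ?k"
  proof -
    define t where "t = ?k - 1"
    have tk: "t < ?k" "t + 1 = ?k" using k0 by (auto simp: t_def)
    have e0: "(t + 1) mod ?k = 0" using tk(2) by simp
    have "isl (vs ! t) \<noteq> isl (vs ! 0)" using alt[OF tk(1)] unfolding e0 .
    then have "odd t" using par[OF tk(1)] h0 by simp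
    then show ?thesis using tk(2) by (metis even_Suc Suc_eq_plus1)
  qed
  moreover have "?k \<noteq> 2"
  proof
    assume k2: "?k = 2"
    then have "[0..<?k] = [0, 1]" by (simp add: upt_rec)
    then show False using A(5) k2 by (simp add: insert_commute)
  qed
  ultimately obtain m where km: "?k = 2 * m" and m2: "2 \<le> m"
  proof -
    from \<open>even ?k\<close> obtain m where km: "?k = 2 * m" by (rule evenE)
    then have "2 \<le> m" using A(1) \<open>?k \<noteq> 2\<close> by linarith
    then show ?thesis using that km by blast
  qed
  have m0: "0 < m" using m2 by linarith
  define as where "as = map (\<lambda>j. projl (vs ! (2 * j))) [0..<m]"
  define bs where "bs = map (\<lambda>j. projr (vs ! (2 * j + 1))) [0..<m]"
  have vsl: "vs ! (2 * j) = Inl (as ! j)" if "j < m" for j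
  proof -
    have "isl (vs ! (2 * j))" using par[of "2*j"] that km by simp
    then show ?thesis using that by (simp add: as_def)
  qed
  have vsr: "vs ! (2 * j + 1) = Inr (bs ! j)" if "j < m" for j
  proof -
    have "\<not> isl (vs ! (2 * j + 1))" using par[of "2*j+1"] that km by simp
    then show ?thesis using that by (simp add: bs_def)
  qed
  have w: "walk ?R as bs"
  proof (rule walkI)
    show "length bs = length as" by (simp add: as_def bs_def)
    fix j assume "j < length as"
    then have j: "j < m" by (simp add: as_def)
    have t1: "2 * j < ?k" "2 * j + 1 < ?k" using j km by auto
    have "(2 * j + 1) mod ?k = 2 * j + 1" using t1 by simp
    then have r1: "?R (as ! j) (bs ! j)" using edge[OF t1(1)] vsl[OF j] vsr[OF j] by auto
    have "(2 * j + 1 + 1) mod ?k = 2 * ((j + 1) mod m)"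
    proof -
      have "2 * j + 1 + 1 = 2 * (j + 1)" by simp
      then show ?thesis unfolding km by (simp only: mod_mult_mult1)
    qed
    moreover have "(j + 1) mod m < m" using m0 by simp
    ultimately have "vs ! ((2 * j + 1 + 1) mod ?k) = Inl (as ! ((j + 1) mod m))" using vsl by simp
    then have r2: "?R (as ! ((j + 1) mod m)) (bs ! j)" using edge[OF t1(2)] vsr[OF j] by auto
    show "?R (as ! j) (bs ! j) \<and> ?R (as ! ((j + 1) mod length as)) (bs ! j)"
      using r1 r2 by (simp add: as_def)
  qed
  have da: "distinct as" unfolding distinct_conv_nth
  proof (intro allI impI)
    fix i j assume "i < length as" "j < length as" "i \<noteq> j"
    then have ij: "i < m" "j < m" "i \<noteq> j" by (auto simp: as_def)
    then have "vs ! (2 * i) \<noteq> vs ! (2 * j)" using A(3) km by (simp add: nth_eq_iff_index_eq)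
    then show "as ! i \<noteq> as ! j" using vsl ij by auto
  qed
  have db: "distinct bs" unfolding distinct_conv_nth
  proof (intro allI impI)
    fix i j assume "i < length bs" "j < length bs" "i \<noteq> j"
    then have ij: "i < m" "j < m" "i \<noteq> j" by (auto simp: bs_def)
    then have "vs ! (2 * i + 1) \<noteq> vs ! (2 * j + 1)" using A(3) km by (simp add: nth_eq_iff_index_eq)
    then show "bs ! i \<noteq> bs ! j" using vsr ij by auto
  qed
  have "altcyc ?R as bs" using w da db m2 by (simp add: altcyc_def as_def)
  then show ?thesis by blast
qed

lemma ext_cycle_altcyc:
  assumes sc: "simple_cycle (extension_graph X v) vs ls"
  shows "\<exists>as bs. altcyc (\<lambda>a b. a # v @ [b] \<in> language X) as bs"
proof (cases "isl (vs ! 0)")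
  case True then show ?thesis using ext_cycle_altcyc0[OF sc] by blast
next
  case False
  have sc1: "simple_cycle (extension_graph X v) (rotate 1 vs) (rotate 1 ls)" by (rule sc_rotate[OF sc])
  let ?k = "length vs"
  have A: "2 \<le> ?k" "\<forall>i<?k. (ls ! i, {vs ! i, vs ! ((i + 1) mod ?k)}) \<in> extension_graph X v"
    using sc unfolding simple_cycle_def by auto
  have k0: "0 < ?k" using A(1) by linarith
  have e1: "(0 + 1) mod ?k = 1" using A(1) by simp
  have "(ls ! 0, {vs ! 0, vs ! ((0 + 1) mod ?k)}) \<in> extension_graph X v" using A(2) k0 by blast
  then have "(ls ! 0, {vs ! 0, vs ! 1}) \<in> extension_graph X v" unfolding e1 .
  then obtain a b where "{vs ! 0, vs ! 1} = {Inl a, Inr b}" unfolding ext_mem by blast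
  then have "isl (vs ! 1)" using False by (auto simp: doubleton_eq_iff)
  moreover have "rotate 1 vs ! 0 = vs ! 1"
  proof -
    have "rotate 1 vs ! 0 = vs ! ((1 + 0) mod ?k)" by (rule nth_rotate[OF k0])
    moreover have "(1 + 0) mod ?k = 1" using A(1) by simp
    ultimately show ?thesis by simp
  qed
  ultimately show ?thesis using ext_cycle_altcyc0[OF sc1] by simp
qed



lemma GL_ends: "(l, {x, y}) \<in> GL X n \<Longrightarrow> x \<in> ext_left X l \<and> y \<in> ext_left X l \<and> l \<in> language_n X n"
  unfolding GL_def by (auto simp: doubleton_eq_iff)

lemma GR_ends: "(l, {x, y}) \<in> GR X n \<Longrightarrow> x \<in> ext_right X l \<and> y \<in> ext_right X l \<and> l \<in> language_n X n"
  unfolding GR_def by (auto simp: doubleton_eq_iff)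

lemma GL_proj: assumes "(l, e) \<in> GL X (Suc n)" shows "(butlast l, e) \<in> GL X n"
proof -
  from assms obtain a b where e: "e = {a, b}" and l: "l \<in> language X" "length l = Suc n"
    and ab: "a # l \<in> language X" "b # l \<in> language X" "a \<noteq> b"
    unfolding GL_def language_n_def ext_left_def by blast
  have ll: "l = butlast l @ [last l]" using l(2) by (metis append_butlast_last_id list.size(3) nat.distinct(1))
  have "butlast l \<in> language X" using l(1) ll by (metis lang_append(1))
  moreover have "a # butlast l \<in> language X" using ab(1) ll by (metis Cons_eq_appendI lang_append(1))
  moreover have "b # butlast l \<in> language X" using ab(2) ll by (metis Cons_eq_appendI lang_append(1))
  ultimately show ?thesis using e l(2) ab(3) unfolding GL_def language_n_def ext_left_def by auto
qed

lemma GR_proj: assumes "(l, e) \<in> GR X (Suc n)" shows "(tl l, e) \<in> GR X n"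
proof -
  from assms obtain a b where e: "e = {a, b}" and l: "l \<in> language X" "length l = Suc n"
    and ab: "l @ [a] \<in> language X" "l @ [b] \<in> language X" "a \<noteq> b"
    unfolding GR_def language_n_def ext_right_def by blast
  have ll: "l = [hd l] @ tl l" using l(2) by (cases l) auto
  have "tl l \<in> language X" using l(1) ll by (metis lang_append(2))
  moreover have "tl l @ [a] \<in> language X" using ab(1) ll by (metis append_assoc lang_append(2))
  moreover have "tl l @ [b] \<in> language X" using ab(2) ll by (metis append_assoc lang_append(2))
  ultimately show ?thesis using e l(2) ab(3) unfolding GR_def language_n_def ext_right_def by auto
qed

lemma afl_const: assumes "\<And>l e. (l, e) \<in> G \<Longrightarrow> l = c" shows "acyclic_for_labeling G"
  unfolding acyclic_for_labeling_def simple_cycle_def using assms by (metis)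

lemma sc_edge:
  assumes "simple_cycle G vs ls" "t < length ls"
  shows "(ls ! t, {vs ! t, vs ! ((t + 1) mod length vs)}) \<in> G" "length ls = length vs" "distinct vs"
  using assms unfolding simple_cycle_def by auto



lemma step_L:
  assumes A: "\<forall>v \<in> language X. length v < N \<longrightarrow> acyclic_graph (extension_graph X v)"
    and IH: "acyclic_for_labeling (GL X n)" and nN: "Suc n \<le> N"
  shows "acyclic_for_labeling (GL X (Suc n))"
  unfolding acyclic_for_labeling_def
proof (rule allI, rule allI, rule impI, rule ccontr)
  fix vs ls
  assume sc: "simple_cycle (GL X (Suc n)) vs ls"
    and "\<not> (\<forall>i<length ls. \<forall>j<length ls. ls ! i = ls ! j)"
  then obtain i j where ij: "i < length ls" "j < length ls" "ls ! i \<noteq> ls ! j" by blast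
  have lk: "length ls = length vs" "distinct vs" using sc by (auto simp: simple_cycle_def)
  have ed: "vs ! t \<in> ext_left X (ls ! t) \<and> vs ! ((t + 1) mod length vs) \<in> ext_left X (ls ! t)
            \<and> ls ! t \<in> language_n X (Suc n)" if "t < length ls" for t
    using GL_ends[OF sc_edge(1)[OF sc that]] .
  show False
  proof (cases "\<exists>i<length ls. \<exists>j<length ls. butlast (ls ! i) \<noteq> butlast (ls ! j)")
    case True
    then obtain i j where "i < length ls" "j < length ls" "butlast (ls ! i) \<noteq> butlast (ls ! j)" by blast
    then have "\<not> acyclic_for_labeling (GL X n)"
      using proj_cycle[where p=butlast and G'="GL X n", OF sc GL_proj] by blast
    then show False using IH by simp
  next
    case False
    have i0: "0 < length ls" using ij by linarith
    define v where "v = butlast (ls ! 0)"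
    have bv: "butlast (ls ! t) = v" if "t < length ls" for t
      unfolding v_def using False that i0 by blast
    have lsv: "ls ! t = v @ [last (ls ! t)]" if t: "t < length ls" for t
    proof -
      have "length (ls ! t) = Suc n" using ed[OF t] by (simp add: language_n_def)
      then have "ls ! t \<noteq> []" by auto
      then show ?thesis using bv[OF t] by (metis append_butlast_last_id)
    qed
    let ?R = "\<lambda>a b. a # v @ [b] \<in> language X"
    have w: "walk ?R vs (map last ls)"
    proof (rule walkI)
      show "length (map last ls) = length vs" using lk by simp
      fix t assume "t < length vs"
      then have t: "t < length ls" using lk by simp
      have "vs ! t # ls ! t \<in> language X" "vs ! ((t + 1) mod length vs) # ls ! t \<in> language X"
        using ed[OF t] by (auto simp: ext_left_def)
      then show "?R (vs ! t) (map last ls ! t) \<and> ?R (vs ! ((t + 1) mod length vs)) (map last ls ! t)"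
        using lsv[OF t] t by (metis nth_map)
    qed
    have "last (ls ! i) \<noteq> last (ls ! j)" using ij lsv by metis
    moreover have "last (ls ! i) \<in> set (map last ls)" "last (ls ! j) \<in> set (map last ls)"
      using ij by auto
    ultimately obtain as bs where "altcyc ?R as bs" using walk_extract[OF w lk(2)] by blast
    then have "\<not> acyclic_graph (extension_graph X v)" by (rule altcyc_ext)
    moreover have "v \<in> language X"
    proof -
      have "ls ! 0 \<in> language X" using ed[OF i0] by (simp add: language_n_def)
      then show ?thesis using lsv[OF i0] by (metis lang_append(1))
    qed
    moreover have "length v < N"
    proof -
      have "length (ls ! 0) = Suc n" using ed[OF i0] by (simp add: language_n_def)
      then show ?thesis using nN by (simp add: v_def)
    qed
    ultimately show False using A by blast
  qed
qed

lemma step_R: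
  assumes A: "\<forall>v \<in> language X. length v < N \<longrightarrow> acyclic_graph (extension_graph X v)"
    and IH: "acyclic_for_labeling (GR X n)" and nN: "Suc n \<le> N"
  shows "acyclic_for_labeling (GR X (Suc n))"
  unfolding acyclic_for_labeling_def
proof (rule allI, rule allI, rule impI, rule ccontr)
  fix vs ls
  assume sc: "simple_cycle (GR X (Suc n)) vs ls"
    and "\<not> (\<forall>i<length ls. \<forall>j<length ls. ls ! i = ls ! j)"
  then obtain i j where ij: "i < length ls" "j < length ls" "ls ! i \<noteq> ls ! j" by blast
  have lk: "length ls = length vs" "distinct vs" using sc by (auto simp: simple_cycle_def)
  have ed: "vs ! t \<in> ext_right X (ls ! t) \<and> vs ! ((t + 1) mod length vs) \<in> ext_right X (ls ! t)
            \<and> ls ! t \<in> language_n X (Suc n)" if "t < length ls" for t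
    using GR_ends[OF sc_edge(1)[OF sc that]] .
  show False
  proof (cases "\<exists>i<length ls. \<exists>j<length ls. tl (ls ! i) \<noteq> tl (ls ! j)")
    case True
    then obtain i j where "i < length ls" "j < length ls" "tl (ls ! i) \<noteq> tl (ls ! j)" by blast
    then have "\<not> acyclic_for_labeling (GR X n)"
      using proj_cycle[where p=tl and G'="GR X n", OF sc GR_proj] by blast
    then show False using IH by simp
  next
    case False
    have i0: "0 < length ls" using ij by linarith
    define v where "v = tl (ls ! 0)"
    have bv: "tl (ls ! t) = v" if "t < length ls" for t
      unfolding v_def using False that i0 by blast
    have lsv: "ls ! t = hd (ls ! t) # v" if t: "t < length ls" for t
    proof -
      have "length (ls ! t) = Suc n" using ed[OF t] by (simp add: language_n_def)
      then have "ls ! t \<noteq> []" by auto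
      then show ?thesis using bv[OF t] by (metis list.collapse)
    qed
    let ?R' = "\<lambda>b a. a # v @ [b] \<in> language X"
    have w: "walk ?R' vs (map hd ls)"
    proof (rule walkI)
      show "length (map hd ls) = length vs" using lk by simp
      fix t assume "t < length vs"
      then have t: "t < length ls" using lk by simp
      have "ls ! t @ [vs ! t] \<in> language X" "ls ! t @ [vs ! ((t + 1) mod length vs)] \<in> language X"
        using ed[OF t] by (auto simp: ext_right_def)
      then show "?R' (vs ! t) (map hd ls ! t) \<and> ?R' (vs ! ((t + 1) mod length vs)) (map hd ls ! t)"
        using lsv[OF t] t by (metis nth_map append_Cons)
    qed
    have "hd (ls ! i) \<noteq> hd (ls ! j)" using ij lsv by metis
    moreover have "hd (ls ! i) \<in> set (map hd ls)" "hd (ls ! j) \<in> set (map hd ls)"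
      using ij by auto
    ultimately obtain bs as where "altcyc ?R' bs as" using walk_extract[OF w lk(2)] by blast
    then have "altcyc (\<lambda>a b. a # v @ [b] \<in> language X) as (rotate1 bs)" by (rule altcyc_flip)
    then have "\<not> acyclic_graph (extension_graph X v)" by (rule altcyc_ext)
    moreover have "v \<in> language X"
    proof -
      have "ls ! 0 \<in> language X" using ed[OF i0] by (simp add: language_n_def)
      then show ?thesis using lsv[OF i0] by (metis lang_append(2) append_Cons append_Nil)
    qed
    moreover have "length v < N"
    proof -
      have "length (ls ! 0) = Suc n" using ed[OF i0] by (simp add: language_n_def)
      then show ?thesis using nN by (simp add: v_def)
    qed
    ultimately show False using A by blast
  qed
qed

lemma base_L: "acyclic_for_labeling (GL X 0)"
  by (rule afl_const[where c = "[]"]) (auto simp: GL_def language_n_def)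

lemma base_R: "acyclic_for_labeling (GR X 0)"
  by (rule afl_const[where c = "[]"]) (auto simp: GR_def language_n_def)



lemma back_L:
  assumes B: "\<forall>n \<le> N. acyclic_for_labeling (GL X n)"
  shows "\<forall>v \<in> language X. length v < N \<longrightarrow> acyclic_graph (extension_graph X v)"
proof (intro ballI impI)
  fix v assume v: "v \<in> language X" and lv: "length v < N"
  show "acyclic_graph (extension_graph X v)" unfolding acyclic_graph_def
  proof (intro allI notI)
    fix vs ls assume "simple_cycle (extension_graph X v) vs ls"
    then obtain as bs where ac: "altcyc (\<lambda>a b. a # v @ [b] \<in> language X) as bs"
      using ext_cycle_altcyc by blast
    have "\<not> acyclic_for_labeling (GL X (Suc (length v)))"
    proof (rule altcyc_cycle[OF ac, where f = "\<lambda>b. v @ [b]"])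
      show "inj (\<lambda>b. v @ [b])" by (rule injI) simp
      fix x x' y assume "x # v @ [y] \<in> language X" "x' # v @ [y] \<in> language X" "x \<noteq> x'"
      moreover have "v @ [y] \<in> language X"
        using lang_append(2)[of "[x]" "v @ [y]"] calculation(1) by simp
      ultimately show "(v @ [y], {x, x'}) \<in> GL X (Suc (length v))"
        unfolding GL_def language_n_def ext_left_def by auto
    qed
    then show False using B lv by simp
  qed
qed

lemma back_R:
  assumes C: "\<forall>n \<le> N. acyclic_for_labeling (GR X n)"
  shows "\<forall>v \<in> language X. length v < N \<longrightarrow> acyclic_graph (extension_graph X v)"
proof (intro ballI impI)
  fix v assume v: "v \<in> language X" and lv: "length v < N"
  show "acyclic_graph (extension_graph X v)" unfolding acyclic_graph_def
  proof (intro allI notI)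
    fix vs ls assume "simple_cycle (extension_graph X v) vs ls"
    then obtain as bs where ac: "altcyc (\<lambda>a b. a # v @ [b] \<in> language X) as bs"
      using ext_cycle_altcyc by blast
    have ac2: "altcyc (\<lambda>b a. a # v @ [b] \<in> language X) bs (rotate1 as)"
      using altcyc_flip[OF ac] by simp
    have "\<not> acyclic_for_labeling (GR X (Suc (length v)))"
    proof (rule altcyc_cycle[OF ac2, where f = "\<lambda>a. a # v"])
      show "inj (\<lambda>a. a # v)" by (rule injI) simp
      fix x x' y assume "y # v @ [x] \<in> language X" "y # v @ [x'] \<in> language X" "x \<noteq> x'"
      moreover have "y # v \<in> language X"
        using lang_append(1)[of "y # v" "[x]"] calculation(1) by simp
      ultimately show "(y # v, {x, x'}) \<in> GR X (Suc (length v))"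
        unfolding GR_def language_n_def ext_right_def by auto
    qed
    then show False using C lv by simp
  qed
qed

lemma fwd_L:
  assumes A: "\<forall>v \<in> language X. length v < N \<longrightarrow> acyclic_graph (extension_graph X v)"
  shows "\<forall>n \<le> N. acyclic_for_labeling (GL X n)"
proof (intro allI impI)
  fix n assume "n \<le> N" then show "acyclic_for_labeling (GL X n)"
    by (induction n) (auto intro: base_L step_L[OF A])
qed

lemma fwd_R:
  assumes A: "\<forall>v \<in> language X. length v < N \<longrightarrow> acyclic_graph (extension_graph X v)"
  shows "\<forall>n \<le> N. acyclic_for_labeling (GR X n)"
proof (intro allI impI)
  fix n assume "n \<le> N" then show "acyclic_for_labeling (GR X n)"
    by (induction n) (auto intro: base_R step_R[OF A])
qed

theorem mainTheorem5:
  fixes X :: "(int \<Rightarrow> 'a::finite) set" and N :: nat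
  assumes "shift_space X"
  shows "((\<forall>v \<in> language X. length v < N \<longrightarrow> acyclic_graph (extension_graph X v))
            \<longleftrightarrow> (\<forall>n \<le> N. acyclic_for_labeling (GL X n)))
       \<and> ((\<forall>n \<le> N. acyclic_for_labeling (GL X n))
            \<longleftrightarrow> (\<forall>n \<le> N. acyclic_for_labeling (GR X n)))"
  using fwd_L[of X N] fwd_R[of X N] back_L[of N X] back_R[of N X] by blast

end
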